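(* Let $A\in\mathbb{R}^{m\times n}$, $K\in\{0,\ldots,\min\{m,n\}-1\}$, $\gamma>0$, and let $X^*$ be a d-stationary point of $$\min_{X\in\mathbb{R}^{m\times n}}\ \|A-X\|_1+\gamma\mathcal{T}_K(X),$$ where $\|Y\|_1=\sum_{i,j}|Y_{i,j}|$. If $\gamma>\sqrt{mn}$, then $\mathcal{T}_K(X^* )=0$, i.e., $\mathrm{rank}(X^* )\le K$.
   Context: $\mathcal{T}_K(X)=\sum_{i=K+1}^{\min\{m,n\}}\sigma_i(X)$, with $\sigma_i(X)$ the $i$-th largest singular value. A point is d-stationary if the directional derivative of the objective there is $\ge0$ in every direction. *)

theory Defs
  imports "Jordan_Normal_Form.Char_Poly" "HOL-Computational_Algebra.Polynomial"
begin

definition gram_eigs_desc :: "real mat \<Rightarrow> real list" where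
  "gram_eigs_desc X = rev (sorted_list_of_multiset (proots (char_poly (transpose_mat X * X))))"

text \<open>i-th largest singular value (1-indexed): square root of the i-th largest eigenvalue of X^T X.\<close>
definition sing_val :: "real mat \<Rightarrow> nat \<Rightarrow> real" where
  "sing_val X i = sqrt (gram_eigs_desc X ! (i - 1))"

definition trunc_nuc :: "nat \<Rightarrow> real mat \<Rightarrow> real" where
  "trunc_nuc K X = (\<Sum>i = K + 1 .. min (dim_row X) (dim_col X). sing_val X i)"

definition l1_norm_mat :: "real mat \<Rightarrow> real" where
  "l1_norm_mat Y = (\<Sum>i < dim_row Y. \<Sum>j < dim_col Y. \<bar>Y $$ (i, j)\<bar>)"

definition obj :: "real mat \<Rightarrow> nat \<Rightarrow> real \<Rightarrow> real mat \<Rightarrow> real" where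
  "obj A K \<gamma> X = l1_norm_mat (A - X) + \<gamma> * trunc_nuc K X"

definition d_stationary :: "nat \<Rightarrow> nat \<Rightarrow> (real mat \<Rightarrow> real) \<Rightarrow> real mat \<Rightarrow> bool" where
  "d_stationary m n F X \<longleftrightarrow> X \<in> carrier_mat m n \<and>
     (\<forall>D \<in> carrier_mat m n. \<exists>L. L \<ge> 0 \<and>
        ((\<lambda>t. (F (X + t \<cdot>\<^sub>m D) - F X) / t) \<longlongrightarrow> L) (at_right 0))"

end

theory Submission
  imports Defs "Jordan_Normal_Form.Schur_Decomposition"
begin

lemma mult_entry:
  assumes "A \<in> carrier_mat a b" "B \<in> carrier_mat b c" "i < a" "j < c"
  shows "(A * B) $$ (i, j) = (\<Sum>l<b. A $$ (i, l) * B $$ (l, j))"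
  using assms by (auto simp: scalar_prod_def lessThan_atLeast0 intro!: sum.cong)

definition dmat :: "real list \<Rightarrow> real mat" where
  "dmat ds = mat (length ds) (length ds) (\<lambda>(i,j). if i = j then ds ! i else 0)"

lemma dmat_carrier[simp]: "dmat ds \<in> carrier_mat (length ds) (length ds)"
  by (simp add: dmat_def)

lemma dmat_index[simp]: "i < length ds \<Longrightarrow> j < length ds \<Longrightarrow> dmat ds $$ (i,j) = (if i = j then ds ! i else 0)"
  by (simp add: dmat_def)

lemma dmat_dims[simp]: "dim_row (dmat ds) = length ds" "dim_col (dmat ds) = length ds"
  by (simp_all add: dmat_def)

lemma char_poly_dmat: "char_poly (dmat ds) = (\<Prod>a\<leftarrow>ds. [:- a, 1:])"
proof -
  have "upper_triangular (dmat ds)" by (auto simp: upper_triangular_def)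
  from char_poly_upper_triangular[OF dmat_carrier this]
  have "char_poly (dmat ds) = (\<Prod>a\<leftarrow>diag_mat (dmat ds). [:- a, 1:])" .
  moreover have "diag_mat (dmat ds) = ds"
    by (auto simp: diag_mat_def intro: nth_equalityI)
  ultimately show ?thesis by simp
qed

lemma proots_linprod: "proots (\<Prod>a\<leftarrow>ds. [:- a, 1:]) = mset (ds :: real list)"
proof (induction ds)
  case Nil then show ?case by simp
next
  case (Cons d ds)
  have "proots ([:- d, 1:] * (\<Prod>a\<leftarrow>ds. [:- a, 1:])) = proots [:- d, 1:] + proots (\<Prod>a\<leftarrow>ds. [:- a, 1:])"
    by (rule proots_mult) (auto simp: prod_list_zero_iff)
  then show ?case using Cons by simp
qed

lemma orth_right:
  fixes V :: "real mat"
  assumes V: "V \<in> carrier_mat n n" and o: "transpose_mat V * V = 1\<^sub>m n"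
  shows "V * transpose_mat V = 1\<^sub>m n"
  using mat_mult_left_right_inverse[of "transpose_mat V" n V] o V by auto

lemma gram_eigs_from_decomp:
  fixes V X :: "real mat"
  assumes V: "V \<in> carrier_mat n n" and o: "transpose_mat V * V = 1\<^sub>m n"
    and G: "transpose_mat X * X = V * dmat ds * transpose_mat V"
    and len: "length ds = n" and srt: "sorted_wrt (\<ge>) ds"
  shows "gram_eigs_desc X = ds"
proof -
  have o2: "V * transpose_mat V = 1\<^sub>m n" by (rule orth_right[OF V o])
  have D: "dmat ds \<in> carrier_mat n n" using len dmat_carrier[of ds] by simp
  have "similar_mat_wit (transpose_mat X * X) (dmat ds) V (transpose_mat V)"
    unfolding similar_mat_wit_def Let_def using V D o o2 G by auto
  then have "similar_mat (transpose_mat X * X) (dmat ds)"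
    unfolding similar_mat_def by blast
  then have "char_poly (transpose_mat X * X) = (\<Prod>a\<leftarrow>ds. [:- a, 1:])"
    using char_poly_similar char_poly_dmat by metis
  then have pr: "proots (char_poly (transpose_mat X * X)) = mset ds" by (simp add: proots_linprod)
  have "sorted (rev ds)" using srt by (simp add: sorted_wrt_rev)
  then have "sort ds = rev ds" by (intro properties_for_sort) auto
  then show ?thesis unfolding gram_eigs_desc_def pr sorted_list_of_multiset_mset by simp
qed


lemma real_eig_exists:
  fixes A :: "real mat"
  assumes A: "A \<in> carrier_mat n n" and sym: "transpose_mat A = A" and n: "n > 0"
  shows "\<exists>r. poly (char_poly A) r = 0"
proof -
  define Ac :: "complex mat" where "Ac = of_real_hom.mat_hom A"
  have Ac: "Ac \<in> carrier_mat n n" using A by (simp add: Ac_def)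
  have Acij: "Ac $$ (i,j) = complex_of_real (A $$ (i,j))" if "i < n" "j < n" for i j
    using A that by (simp add: Ac_def)
  have symA: "A $$ (i,j) = A $$ (j,i)" if "i < n" "j < n" for i j
    using arg_cong[OF sym, of "\<lambda>M. M $$ (i,j)"] A that by auto
  obtain as where cp: "char_poly Ac = (\<Prod>a\<leftarrow>as. [:- a, 1:])" and las: "length as = n"
    using char_poly_factorized[OF Ac] by blast
  define a where "a = as ! 0"
  have "a \<in> set as" using las n by (simp add: a_def)
  then have "poly (char_poly Ac) a = 0" unfolding cp
    by (simp add: poly_prod_list prod_list_zero_iff)
  then have "eigenvalue Ac a" using eigenvalue_root_char_poly[OF Ac] by simp
  then obtain v where ev: "eigenvector Ac v a" unfolding eigenvalue_def by blast
  then have v: "v \<in> carrier_vec n" and v0: "v \<noteq> 0\<^sub>v n" and Av: "Ac *\<^sub>v v = a \<cdot>\<^sub>v v"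
    using Ac unfolding eigenvector_def by auto
  have Avi: "(\<Sum>j<n. complex_of_real (A $$ (i,j)) * v $ j) = a * v $ i" if "i < n" for i
  proof -
    have "(Ac *\<^sub>v v) $ i = a * v $ i" using Av that v by simp
    moreover have "(Ac *\<^sub>v v) $ i = (\<Sum>j<n. complex_of_real (A $$ (i,j)) * v $ j)"
      using that Ac v by (auto simp: scalar_prod_def lessThan_atLeast0 Acij intro!: sum.cong)
    ultimately show ?thesis by simp
  qed
  define S where "S = (\<Sum>i<n. cnj (v $ i) * (\<Sum>j<n. complex_of_real (A $$ (i,j)) * v $ j))"
  define N where "N = (\<Sum>i<n. cnj (v $ i) * v $ i)"
  have SN: "S = a * N" unfolding S_def N_def
    by (auto simp: Avi sum_distrib_left intro!: sum.cong)
  have "cnj S = (\<Sum>i<n. v $ i * (\<Sum>j<n. complex_of_real (A $$ (i,j)) * cnj (v $ j)))"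
    unfolding S_def by (simp add: sum_distrib_left)
  also have "\<dots> = (\<Sum>i<n. \<Sum>j<n. v $ i * complex_of_real (A $$ (i,j)) * cnj (v $ j))"
    by (simp add: sum_distrib_left mult.assoc)
  also have "\<dots> = (\<Sum>j<n. \<Sum>i<n. v $ i * complex_of_real (A $$ (i,j)) * cnj (v $ j))"
    by (rule sum.swap)
  also have "\<dots> = S" unfolding S_def
    by (auto simp: sum_distrib_left symA intro!: sum.cong)
  finally have cS: "cnj S = S" .
  have Nr: "N = complex_of_real (\<Sum>i<n. (cmod (v $ i))^2)"
    unfolding N_def of_real_sum by (rule sum.cong[OF refl]) (simp only: complex_norm_square mult.commute)
  have "\<exists>i<n. v $ i \<noteq> 0"
  proof (rule ccontr)
    assume "\<not> ?thesis"
    then have "v = 0\<^sub>v n" using v by (intro eq_vecI) auto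
    with v0 show False by simp
  qed
  then obtain i0 where i0: "i0 < n" "v $ i0 \<noteq> 0" by blast
  have "(\<Sum>i<n. (cmod (v $ i))^2) \<ge> (cmod (v $ i0))^2"
    using i0 by (intro member_le_sum) auto
  moreover have "(cmod (v $ i0))^2 > 0" using i0 by simp
  ultimately have Npos: "(\<Sum>i<n. (cmod (v $ i))^2) > 0" by linarith
  have "Im S = 0" using arg_cong[OF cS, of Im] by simp
  then have "Im a * (\<Sum>i<n. (cmod (v $ i))^2) = 0" using SN Nr by simp
  then have "Im a = 0" using Npos by simp
  then have aR: "a = complex_of_real (Re a)" by (simp add: complex_eq_iff)
  have "poly (char_poly Ac) a = 0" using \<open>eigenvalue Ac a\<close> eigenvalue_root_char_poly[OF Ac] by simp
  also have "char_poly Ac = map_poly of_real (char_poly A)"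
    unfolding Ac_def by (rule of_real_hom.char_poly_hom[OF A])
  finally have "poly (map_poly complex_of_real (char_poly A)) (complex_of_real (Re a)) = 0"
    using aR by simp
  then have "poly (char_poly A) (Re a) = 0" by (simp add: of_real_hom.poly_map_poly)
  then show ?thesis by blast
qed


lemma conj_real_vec[simp]: "conjugate (v :: real vec) = v"
  by (intro eq_vecI) auto

lemma self_sprod_nonneg: "(w :: real vec) \<bullet> w \<ge> 0"
  unfolding scalar_prod_def by (intro sum_nonneg) auto

lemma orthonormal_completion:
  fixes u :: "real vec"
  assumes u: "u \<in> carrier_vec n" and uu: "u \<bullet> u = 1"
  shows "\<exists>zs. length zs = n \<and> set zs \<subseteq> carrier_vec n \<and> hd zs = u \<and>
     (\<forall>i<n. \<forall>j<n. zs ! i \<bullet> zs ! j = (if i = j then 1 else 0))"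
proof -
  interpret cof_vec_space n "TYPE(real)" .
  have u0: "u \<noteq> 0\<^sub>v n" using uu by auto
  define b where "b = basis_completion u"
  from basis_completion[OF u u0, folded b_def]
  have b: "set b \<subseteq> carrier_vec n" and dist_b: "distinct b" 
    and indep: "\<not> lin_dep (set b)" and hdb: "hd b = u" and len_b: "length b = n" by auto
  have n: "n > 0" using u0 u by (cases n) auto
  from hdb len_b n obtain vs where bv: "b = u # vs" by (cases b) auto
  define ws where "ws = gram_schmidt n b"
  from gram_schmidt_result[OF b dist_b indep ws_def]
  have ws: "set ws \<subseteq> carrier_vec n" "corthogonal ws" "length ws = n" by (auto simp: len_b)
  have hdws: "hd ws = u" unfolding ws_def bv using u by simp
  define nz :: "real vec \<Rightarrow> real vec" where "nz w = (1 / sqrt (w \<bullet> w)) \<cdot>\<^sub>v w" for w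
  define zs where "zs = map nz ws"
  have wsi: "ws ! i \<in> carrier_vec n" if "i < n" for i using ws that by auto
  have orth: "ws ! i \<bullet> ws ! j = 0 \<longleftrightarrow> i \<noteq> j" if "i < n" "j < n" for i j
    using corthogonalD[OF ws(2), of i j] ws that by simp
  have pos: "ws ! i \<bullet> ws ! i > 0" if "i < n" for i
    using orth[OF that that] self_sprod_nonneg[of "ws ! i"] by linarith
  have "zs ! i \<bullet> zs ! j = (if i = j then 1 else 0)" if "i < n" "j < n" for i j
  proof -
    have "zs ! i \<bullet> zs ! j = (1 / sqrt (ws!i \<bullet> ws!i)) * ((1 / sqrt (ws!j \<bullet> ws!j)) * (ws ! i \<bullet> ws ! j))"
      unfolding zs_def nz_def using that ws wsi[OF that(1)] wsi[OF that(2)]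
      by (simp add: smult_scalar_prod_distrib scalar_prod_smult_distrib)
    also have "\<dots> = (if i = j then 1 else 0)"
    proof (cases "i = j")
      case True
      have p: "ws!i \<bullet> ws!i > 0" using pos that by simp
      then have "sqrt (ws!i \<bullet> ws!i) * sqrt (ws!i \<bullet> ws!i) = ws!i \<bullet> ws!i"
        by simp
      then show ?thesis using True p by (simp add: field_simps)
    next
      case False then show ?thesis using orth[OF that] by simp
    qed
    finally show ?thesis .
  qed
  moreover have "length zs = n" using ws by (simp add: zs_def)
  moreover have "set zs \<subseteq> carrier_vec n" using ws by (auto simp: zs_def nz_def)
  moreover have "hd zs = u"
  proof -
    have "ws \<noteq> []" using ws n by auto
    then have "hd zs = nz u" unfolding zs_def using hdws by (simp add: hd_map)
    also have "nz u = u" unfolding nz_def uu by simp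
    finally show ?thesis .
  qed
  ultimately show ?thesis by blast
qed


lemma col_dmat_mult:
  assumes V: "V \<in> carrier_mat n n" and len: "length ds = n" and j: "j < n"
  shows "col (V * dmat ds) j = ds ! j \<cdot>\<^sub>v col V j"
proof (rule eq_vecI)
  show "dim_vec (col (V * dmat ds) j) = dim_vec (ds ! j \<cdot>\<^sub>v col V j)" using V len by simp
  fix i assume "i < dim_vec (ds ! j \<cdot>\<^sub>v col V j)"
  then have i: "i < n" using V by simp
  have D: "dmat ds \<in> carrier_mat n n" using len dmat_carrier[of ds] by simp
  have "col (V * dmat ds) j $ i = (V * dmat ds) $$ (i, j)" by (rule index_col) (use i j V D in auto)
  also have "\<dots> = (\<Sum>l<n. V $$ (i, l) * dmat ds $$ (l, j))" by (rule mult_entry[OF V D i j])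
  also have "\<dots> = (\<Sum>l<n. if l = j then V $$ (i, j) * ds ! j else 0)"
    using len j by (intro sum.cong) auto
  also have "\<dots> = V $$ (i, j) * ds ! j" using j by simp
  finally show "col (V * dmat ds) j $ i = (ds ! j \<cdot>\<^sub>v col V j) $ i" using i j V by simp
qed

lemma decomp_eigenvalue:
  fixes V A :: "real mat"
  assumes V: "V \<in> carrier_mat n n" and o: "transpose_mat V * V = 1\<^sub>m n"
    and AV: "A = V * dmat ds * transpose_mat V" and len: "length ds = n" and j: "j < n"
  shows "eigenvalue A (ds ! j)"
proof -
  have D: "dmat ds \<in> carrier_mat n n" using len dmat_carrier[of ds] by simp
  have A: "A \<in> carrier_mat n n" using AV V D by simp
  have VT: "transpose_mat V \<in> carrier_mat n n" using V by simp
  have VD: "V * dmat ds \<in> carrier_mat n n" using V D by simp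
  have "A * V = V * dmat ds * (transpose_mat V * V)" unfolding AV
    using assoc_mult_mat[OF VD VT V] .
  also have "\<dots> = V * dmat ds" using o right_mult_one_mat[OF VD] by simp
  finally have AVV: "A * V = V * dmat ds" .
  have "A *\<^sub>v col V j = col (A * V) j" by (rule col_mult2[OF A V j, symmetric])
  also have "\<dots> = ds ! j \<cdot>\<^sub>v col V j" unfolding AVV by (rule col_dmat_mult[OF V len j])
  finally have ev: "A *\<^sub>v col V j = ds ! j \<cdot>\<^sub>v col V j" .
  have "col V j \<noteq> 0\<^sub>v n"
  proof
    assume c0: "col V j = 0\<^sub>v n"
    have "(transpose_mat V * V) $$ (j, j) = col V j \<bullet> col V j" using V j by simp
    also have "\<dots> = 0" unfolding c0 by simp
    finally show False using o j by simp
  qed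
  then have "eigenvector A (col V j) (ds ! j)"
    unfolding eigenvector_def using ev A V j by auto
  then show ?thesis unfolding eigenvalue_def by blast
qed


lemma tri_entry:
  fixes M N :: "real mat"
  assumes M: "M \<in> carrier_mat a b" and N: "N \<in> carrier_mat b c" and len: "length ds = b"
    and i: "i < a" and j: "j < c"
  shows "(M * dmat ds * N) $$ (i, j) = (\<Sum>l<b. M $$ (i, l) * ds ! l * N $$ (l, j))"
proof -
  have D: "dmat ds \<in> carrier_mat b b" using len dmat_carrier[of ds] by simp
  have MD: "M * dmat ds \<in> carrier_mat a b" using M D by simp
  have e: "(M * dmat ds) $$ (i, l) = M $$ (i, l) * ds ! l" if l: "l < b" for l
  proof -
    have "(M * dmat ds) $$ (i, l) = (\<Sum>p<b. M $$ (i, p) * dmat ds $$ (p, l))"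
      by (rule mult_entry[OF M D i l])
    also have "\<dots> = (\<Sum>p<b. if p = l then M $$ (i, l) * ds ! l else 0)"
      using len l by (intro sum.cong) auto
    also have "\<dots> = M $$ (i, l) * ds ! l" using l by simp
    finally show ?thesis .
  qed
  show ?thesis unfolding mult_entry[OF MD N i j] by (intro sum.cong) (auto simp: e)
qed

lemma sprod_pos: "v \<in> carrier_vec n \<Longrightarrow> v \<noteq> 0\<^sub>v n \<Longrightarrow> (v :: real vec) \<bullet> v > 0"
proof -
  assume v: "v \<in> carrier_vec n" and v0: "v \<noteq> 0\<^sub>v n"
  have "\<exists>i<n. v $ i \<noteq> 0"
  proof (rule ccontr)
    assume "\<not> ?thesis"
    then have "v = 0\<^sub>v n" using v by (intro eq_vecI) auto
    with v0 show False by simp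
  qed
  then obtain i0 where i0: "i0 < n" "v $ i0 \<noteq> 0" by blast
  have "v \<bullet> v = (\<Sum>i\<in>{0..<n}. v $ i * v $ i)" using v by (simp add: scalar_prod_def)
  also have "\<dots> \<ge> v $ i0 * v $ i0" using i0 by (intro member_le_sum) auto
  finally show ?thesis using i0 by (smt (verit) not_real_square_gt_zero)
qed

lemma spectral:
  fixes A :: "real mat"
  assumes "A \<in> carrier_mat n n" "transpose_mat A = A"
  shows "\<exists>V ds. V \<in> carrier_mat n n \<and> transpose_mat V * V = 1\<^sub>m n \<and> length ds = n \<and>
           sorted_wrt (\<ge>) ds \<and> A = V * dmat ds * transpose_mat V"
  using assms
proof (induction n arbitrary: A)
  case 0
  then show ?case
    by (intro exI[of _ "1\<^sub>m 0"] exI[of _ "[]"]) (auto intro!: eq_matI)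
next
  case (Suc k A)
  define n where "n = Suc k"
  have A: "A \<in> carrier_mat n n" using Suc n_def by simp
  have symA: "transpose_mat A = A" using Suc by simp
  have cp0: "char_poly A \<noteq> 0" using degree_monic_char_poly[OF A] by auto
  define R where "R = {r. poly (char_poly A) r = 0}"
  have finR: "finite R" unfolding R_def using cp0 by (rule poly_roots_finite)
  have neR: "R \<noteq> {}" using real_eig_exists[OF A symA] unfolding R_def n_def by auto
  define e where "e = Max R"
  have eR: "e \<in> R" unfolding e_def using finR neR by (rule Max_in)
  have le_e: "r \<le> e" if "eigenvalue A r" for r
  proof -
    have "r \<in> R" using that eigenvalue_root_char_poly[OF A] unfolding R_def by simp
    then show ?thesis unfolding e_def using finR by simp
  qed
  have "eigenvalue A e" using eR eigenvalue_root_char_poly[OF A] unfolding R_def by simp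
  then obtain v where "eigenvector A v e" unfolding eigenvalue_def by blast
  then have v: "v \<in> carrier_vec n" and v0: "v \<noteq> 0\<^sub>v n" and Av: "A *\<^sub>v v = e \<cdot>\<^sub>v v"
    using A unfolding eigenvector_def by auto
  have vpos: "v \<bullet> v > 0" by (rule sprod_pos[OF v v0])
  define u where "u = (1 / sqrt (v \<bullet> v)) \<cdot>\<^sub>v v"
  have u: "u \<in> carrier_vec n" using v by (simp add: u_def)
  have uu: "u \<bullet> u = 1"
  proof -
    have "u \<bullet> u = (1 / sqrt (v \<bullet> v)) * ((1 / sqrt (v \<bullet> v)) * (v \<bullet> v))"
      unfolding u_def using v by (simp add: smult_scalar_prod_distrib scalar_prod_smult_distrib)
    also have "\<dots> = 1" using vpos by (simp add: field_simps)
    finally show ?thesis .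
  qed
  have Au: "A *\<^sub>v u = e \<cdot>\<^sub>v u"
    unfolding u_def using mult_mat_vec[OF A v] Av v by (auto simp: smult_smult_assoc mult.commute)
  obtain zs where zs: "length zs = n" "set zs \<subseteq> carrier_vec n" "hd zs = u"
    and zorth: "\<And>i j. i < n \<Longrightarrow> j < n \<Longrightarrow> zs ! i \<bullet> zs ! j = (if i = j then 1 else 0)"
    using orthonormal_completion[OF u uu] by blast
  define W where "W = mat_of_cols n zs"
  have W: "W \<in> carrier_mat n n" unfolding W_def using zs mat_of_cols_carrier(1)[of n zs] by simp
  have WT: "transpose_mat W \<in> carrier_mat n n" using W by simp
  have colW: "col W i = zs ! i" if "i < n" for i
    unfolding W_def using zs that by (intro col_mat_of_cols) auto
  have zsi: "zs ! i \<in> carrier_vec n" if "i < n" for i using zs that by auto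
  have z0: "zs ! 0 = u" using zs by (cases zs) (auto simp: n_def)
  have WtW: "transpose_mat W * W = 1\<^sub>m n"
  proof (rule eq_matI)
    fix i j assume "i < dim_row (1\<^sub>m n)" "j < dim_col (1\<^sub>m n)"
    then have ij: "i < n" "j < n" by auto
    have "(transpose_mat W * W) $$ (i, j) = row (transpose_mat W) i \<bullet> col W j"
      using ij W by simp
    also have "\<dots> = zs ! i \<bullet> zs ! j" using ij W colW by simp
    finally show "(transpose_mat W * W) $$ (i, j) = 1\<^sub>m n $$ (i, j)" using zorth[OF ij] ij by simp
  qed (use W in auto)
  have WWt: "W * transpose_mat W = 1\<^sub>m n" by (rule orth_right[OF W WtW])
  define A' where "A' = transpose_mat W * A * W"
  have WA: "transpose_mat W * A \<in> carrier_mat n n" using WT A by simp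
  have AW: "A * W \<in> carrier_mat n n" using A W by simp
  have A': "A' \<in> carrier_mat n n" unfolding A'_def using WA W by simp
  have A'e: "A' $$ (i, j) = zs ! i \<bullet> (A *\<^sub>v zs ! j)" if ij: "i < n" "j < n" for i j
  proof -
    have "A' = transpose_mat W * (A * W)" unfolding A'_def by (rule assoc_mult_mat[OF WT A W])
    then have "A' $$ (i, j) = row (transpose_mat W) i \<bullet> col (A * W) j" using ij WT AW by simp
    also have "\<dots> = col W i \<bullet> (A *\<^sub>v col W j)" using ij W A col_mult2[OF A W ij(2)] by (simp del: col_mult)
    finally show ?thesis using colW ij by simp
  qed
  have A'0: "A' $$ (i, 0) = (if i = 0 then e else 0)" if i: "i < n" for i
  proof -
    have "A' $$ (i, 0) = zs ! i \<bullet> (e \<cdot>\<^sub>v u)" using A'e[OF i] z0 Au by (simp add: n_def)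
    also have "\<dots> = e * (zs ! i \<bullet> zs ! 0)" using zsi[OF i] u z0 by simp
    finally show ?thesis using zorth[of i 0] i by (simp add: n_def)
  qed
  have symA': "transpose_mat A' = A'"
  proof -
    have "transpose_mat A' = transpose_mat W * transpose_mat (transpose_mat W * A)"
      unfolding A'_def by (rule transpose_mult[OF WA W])
    also have "transpose_mat (transpose_mat W * A) = transpose_mat A * W"
      using transpose_mult[OF WT A] by simp
    finally show ?thesis unfolding symA A'_def using assoc_mult_mat[OF WT A W] by simp
  qed
  have A'sym: "A' $$ (i, j) = A' $$ (j, i)" if "i < n" "j < n" for i j
    using arg_cong[OF symA', of "\<lambda>M. M $$ (j, i)"] A' that by simp
  define A3 where "A3 = mat k k (\<lambda>(i, j). A' $$ (Suc i, Suc j))"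
  have A3: "A3 \<in> carrier_mat k k" unfolding A3_def by simp
  have symA3: "transpose_mat A3 = A3"
    unfolding A3_def by (rule eq_matI) (auto simp: A'sym n_def)
  obtain V3 ds3 where V3: "V3 \<in> carrier_mat k k" and V3o: "transpose_mat V3 * V3 = 1\<^sub>m k"
    and len3: "length ds3 = k" and srt3: "sorted_wrt (\<ge>) ds3"
    and A3d: "A3 = V3 * dmat ds3 * transpose_mat V3"
    using Suc.IH[OF A3 symA3] by blast
  define B where "B = mat n n (\<lambda>(i, j). if i = 0 then (if j = 0 then 1 else 0)
     else (if j = 0 then 0 else V3 $$ (i - 1, j - 1)))"
  have B: "B \<in> carrier_mat n n" unfolding B_def by simp
  have BT: "transpose_mat B \<in> carrier_mat n n" using B by simp
  define ds where "ds = e # ds3"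
  have len: "length ds = n" using len3 by (simp add: ds_def n_def)
  have BtB: "transpose_mat B * B = 1\<^sub>m n"
  proof (rule eq_matI)
    fix i j assume "i < dim_row (1\<^sub>m n)" "j < dim_col (1\<^sub>m n)"
    then have ij: "i < n" "j < n" by auto
    have "(transpose_mat B * B) $$ (i, j) = (\<Sum>l<n. B $$ (l, i) * B $$ (l, j))"
      using mult_entry[OF BT B ij] B ij by simp
    also have "\<dots> = B $$ (0, i) * B $$ (0, j) + (\<Sum>l<k. B $$ (Suc l, i) * B $$ (Suc l, j))"
      unfolding n_def by (rule sum.lessThan_Suc_shift)
    also have "\<dots> = 1\<^sub>m n $$ (i, j)"
    proof (cases i)
      case 0
      then show ?thesis using ij by (cases j) (auto simp: B_def n_def)
    next
      case (Suc i')
      show ?thesis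
      proof (cases j)
        case 0
        then show ?thesis using ij Suc by (auto simp: B_def n_def)
      next
        case (Suc j')
        have ij': "i' < k" "j' < k" using ij \<open>i = Suc i'\<close> Suc by (auto simp: n_def)
        have "(\<Sum>l<k. B $$ (Suc l, i) * B $$ (Suc l, j)) = (\<Sum>l<k. V3 $$ (l, i') * V3 $$ (l, j'))"
          using ij' \<open>i = Suc i'\<close> Suc by (intro sum.cong) (auto simp: B_def n_def)
        also have "\<dots> = (transpose_mat V3 * V3) $$ (i', j')"
          using mult_entry[of "transpose_mat V3" k k V3 k i' j'] V3 ij' by simp
        also have "\<dots> = (if i' = j' then 1 else 0)" using V3o ij' by simp
        finally show ?thesis using ij' \<open>i = Suc i'\<close> Suc ij by (auto simp: B_def n_def)
      qed
    qed
    finally show "(transpose_mat B * B) $$ (i, j) = 1\<^sub>m n $$ (i, j)" .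
  qed (use B in auto)
  have A'B: "A' = B * dmat ds * transpose_mat B"
  proof (rule eq_matI)
    fix i j assume "i < dim_row (B * dmat ds * transpose_mat B)" "j < dim_col (B * dmat ds * transpose_mat B)"
    then have ij: "i < n" "j < n" using B by auto
    have "(B * dmat ds * transpose_mat B) $$ (i, j) = (\<Sum>l<n. B $$ (i, l) * ds ! l * transpose_mat B $$ (l, j))"
      by (rule tri_entry[OF B BT len ij])
    also have "\<dots> = (\<Sum>l<n. B $$ (i, l) * ds ! l * B $$ (j, l))"
      using B ij by (intro sum.cong) auto
    also have "\<dots> = B $$ (i, 0) * ds ! 0 * B $$ (j, 0) + (\<Sum>l<k. B $$ (i, Suc l) * ds ! Suc l * B $$ (j, Suc l))"
      unfolding n_def by (rule sum.lessThan_Suc_shift)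
    also have "\<dots> = A' $$ (i, j)"
    proof (cases i)
      case 0
      show ?thesis
      proof (cases j)
        case 0 then show ?thesis using \<open>i = 0\<close> A'0[of 0] by (auto simp: B_def n_def ds_def)
      next
        case (Suc j')
        then show ?thesis using \<open>i = 0\<close> ij A'0[of j] A'sym[of 0 j] by (auto simp: B_def n_def ds_def)
      qed
    next
      case (Suc i')
      show ?thesis
      proof (cases j)
        case 0
        then show ?thesis using Suc ij A'0[of i] by (auto simp: B_def n_def ds_def)
      next
        case (Suc j')
        have ij': "i' < k" "j' < k" using ij \<open>i = Suc i'\<close> Suc by (auto simp: n_def)
        have "(\<Sum>l<k. B $$ (i, Suc l) * ds ! Suc l * B $$ (j, Suc l)) =
              (\<Sum>l<k. V3 $$ (i', l) * ds3 ! l * transpose_mat V3 $$ (l, j'))"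
          using ij' \<open>i = Suc i'\<close> Suc V3 by (intro sum.cong) (auto simp: B_def n_def ds_def)
        also have "\<dots> = A3 $$ (i', j')"
          unfolding A3d by (rule tri_entry[symmetric, OF V3 _ len3 ij']) (use V3 in simp)
        also have "\<dots> = A' $$ (i, j)" using ij' \<open>i = Suc i'\<close> Suc by (simp add: A3_def)
        finally have s: "(\<Sum>l<k. B $$ (i, Suc l) * ds ! Suc l * B $$ (j, Suc l)) = A' $$ (i, j)" .
        have b0: "B $$ (i, 0) = 0" using ij \<open>i = Suc i'\<close> by (simp add: B_def n_def)
        show ?thesis using s b0 by simp
      qed
    qed
    finally show "A' $$ (i, j) = (B * dmat ds * transpose_mat B) $$ (i, j)" by simp
  qed (use B A' len in auto)
  define V where "V = W * B"
  have V: "V \<in> carrier_mat n n" unfolding V_def using W B by simp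
  have D: "dmat ds \<in> carrier_mat n n" using len dmat_carrier[of ds] by simp
  have VT: "transpose_mat V = transpose_mat B * transpose_mat W"
    unfolding V_def by (rule transpose_mult[OF W B])
  have VtV: "transpose_mat V * V = 1\<^sub>m n"
  proof -
    have "transpose_mat V * V = transpose_mat B * transpose_mat W * (W * B)"
      using VT by (simp add: V_def)
    also have "\<dots> = transpose_mat B * (transpose_mat W * (W * B))"
      using assoc_mult_mat[OF BT WT, of "W * B" n] W B by simp
    also have "transpose_mat W * (W * B) = B"
      using assoc_mult_mat[OF WT W B, symmetric] WtW B by simp
    finally show ?thesis using BtB by simp
  qed
  have AA': "A = W * A' * transpose_mat W"
  proof -
    have "W * A' = (W * transpose_mat W) * A * W"
      unfolding A'_def using assoc_mult_mat[OF W WA W, symmetric] assoc_mult_mat[OF W WT A, symmetric] by simp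
    also have "\<dots> = A * W" using WWt A by simp
    finally have "W * A' * transpose_mat W = A * (W * transpose_mat W)"
      using assoc_mult_mat[OF A W WT] by simp
    then show ?thesis using WWt A by simp
  qed
  have AV: "A = V * dmat ds * transpose_mat V"
  proof -
    have BD: "B * dmat ds \<in> carrier_mat n n" using B D by simp
    have "A = W * (B * dmat ds * transpose_mat B) * transpose_mat W" using AA' A'B by simp
    also have "W * (B * dmat ds * transpose_mat B) = (W * (B * dmat ds)) * transpose_mat B"
      using assoc_mult_mat[OF W BD BT, symmetric] .
    also have "W * (B * dmat ds) = V * dmat ds"
      unfolding V_def using assoc_mult_mat[OF W B D, symmetric] .
    also have "V * dmat ds * transpose_mat B * transpose_mat W = V * dmat ds * transpose_mat V"
      unfolding VT using assoc_mult_mat[of "V * dmat ds" n n "transpose_mat B" n "transpose_mat W" n] V D B W by simp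
    finally show ?thesis .
  qed
  have "\<forall>x\<in>set ds3. x \<le> e"
  proof
    fix x assume "x \<in> set ds3"
    then obtain j where j: "j < k" "ds3 ! j = x" using len3 by (auto simp: in_set_conv_nth)
    have "eigenvalue A (ds ! Suc j)"
      by (rule decomp_eigenvalue[OF V VtV AV len]) (use j in \<open>simp add: n_def\<close>)
    then show "x \<le> e" using le_e j by (simp add: ds_def)
  qed
  then have "sorted_wrt (\<ge>) ds" using srt3 by (simp add: ds_def)
  then show ?case using V VtV len AV unfolding n_def by blast
qed


lemma transpose_dmat[simp]: "transpose_mat (dmat ds) = dmat ds"
  by (rule eq_matI) auto

lemma gram_conj:
  fixes Y F V :: "real mat"
  assumes Y: "Y \<in> carrier_mat m n" and F: "F \<in> carrier_mat n n" and V: "V \<in> carrier_mat n n"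
  shows "transpose_mat (Y * F * transpose_mat V) * (Y * F * transpose_mat V)
         = V * (transpose_mat F * (transpose_mat Y * Y) * F) * transpose_mat V"
proof -
  have VT: "transpose_mat V \<in> carrier_mat n n" using V by simp
  have FT: "transpose_mat F \<in> carrier_mat n n" using F by simp
  have YT: "transpose_mat Y \<in> carrier_mat n m" using Y by simp
  have YF: "Y * F \<in> carrier_mat m n" using Y F by simp
  have YFT: "transpose_mat (Y * F) \<in> carrier_mat n m" using YF by simp
  have M: "Y * F * transpose_mat V \<in> carrier_mat m n" using YF VT by simp
  have "transpose_mat (Y * F * transpose_mat V) = V * transpose_mat (Y * F)"
    using transpose_mult[OF YF VT] by simp
  also have "transpose_mat (Y * F) = transpose_mat F * transpose_mat Y"
    by (rule transpose_mult[OF Y F])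
  finally have T: "transpose_mat (Y * F * transpose_mat V) = V * (transpose_mat F * transpose_mat Y)" .
  have FTYT: "transpose_mat F * transpose_mat Y \<in> carrier_mat n m" using FT YT by simp
  have YTY: "transpose_mat Y * Y \<in> carrier_mat n n" using YT Y by simp
  have "V * (transpose_mat F * transpose_mat Y) * (Y * F * transpose_mat V)
        = V * ((transpose_mat F * transpose_mat Y) * (Y * F * transpose_mat V))"
    using assoc_mult_mat[OF V FTYT M] .
  also have "(transpose_mat F * transpose_mat Y) * (Y * F * transpose_mat V)
        = ((transpose_mat F * transpose_mat Y) * (Y * F)) * transpose_mat V"
    using assoc_mult_mat[OF FTYT YF VT, symmetric] by (simp add: assoc_mult_mat[OF Y F VT])
  also have "(transpose_mat F * transpose_mat Y) * (Y * F) = transpose_mat F * (transpose_mat Y * (Y * F))"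
    using assoc_mult_mat[OF FT YT YF] .
  also have "transpose_mat Y * (Y * F) = (transpose_mat Y * Y) * F"
    using assoc_mult_mat[OF YT Y F, symmetric] .
  also have "transpose_mat F * ((transpose_mat Y * Y) * F) = transpose_mat F * (transpose_mat Y * Y) * F"
    using assoc_mult_mat[OF FT YTY F, symmetric] .
  also have "V * (transpose_mat F * (transpose_mat Y * Y) * F * transpose_mat V)
     = V * (transpose_mat F * (transpose_mat Y * Y) * F) * transpose_mat V"
    using assoc_mult_mat[OF V _ VT, of "transpose_mat F * (transpose_mat Y * Y) * F"] FT YTY F by simp
  finally show ?thesis unfolding T .
qed

lemma dmat3:
  assumes la: "length a = n" and lb: "length b = n"
  shows "dmat a * dmat b * dmat a = dmat (map (\<lambda>i. a ! i * b ! i * a ! i) [0..<n])"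
proof (rule eq_matI)
  fix i j assume "i < dim_row (dmat (map (\<lambda>i. a ! i * b ! i * a ! i) [0..<n]))"
    "j < dim_col (dmat (map (\<lambda>i. a ! i * b ! i * a ! i) [0..<n]))"
  then have ij: "i < n" "j < n" by auto
  have A: "dmat a \<in> carrier_mat n n" using la dmat_carrier[of a] by simp
  have "(dmat a * dmat b * dmat a) $$ (i, j) = (\<Sum>l<n. dmat a $$ (i, l) * b ! l * dmat a $$ (l, j))"
    by (rule tri_entry[OF A A lb ij])
  also have "\<dots> = (\<Sum>l<n. if l = i then (if i = j then a ! i * b ! i * a ! i else 0) else 0)"
    using ij la by (intro sum.cong) auto
  also have "\<dots> = (if i = j then a ! i * b ! i * a ! i else 0)" using ij by simp
  finally show "(dmat a * dmat b * dmat a) $$ (i, j) = dmat (map (\<lambda>i. a ! i * b ! i * a ! i) [0..<n]) $$ (i, j)"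
    using ij by simp
qed (use la lb in auto)

lemma trace_conj:
  fixes V :: "real mat"
  assumes V: "V \<in> carrier_mat n n" and o: "transpose_mat V * V = 1\<^sub>m n" and len: "length nu = n"
  shows "(\<Sum>j<n. (V * dmat nu * transpose_mat V) $$ (j, j)) = (\<Sum>l<n. nu ! l)"
proof -
  have VT: "transpose_mat V \<in> carrier_mat n n" using V by simp
  have cs: "(\<Sum>j<n. V $$ (j, l) * V $$ (j, l)) = 1" if l: "l < n" for l
  proof -
    have "(transpose_mat V * V) $$ (l, l) = (\<Sum>j<n. transpose_mat V $$ (l, j) * V $$ (j, l))"
      by (rule mult_entry[OF VT V l l])
    also have "\<dots> = (\<Sum>j<n. V $$ (j, l) * V $$ (j, l))" using V l by (intro sum.cong) auto
    finally show ?thesis using o l by simp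
  qed
  have "(\<Sum>j<n. (V * dmat nu * transpose_mat V) $$ (j, j))
      = (\<Sum>j<n. \<Sum>l<n. V $$ (j, l) * nu ! l * transpose_mat V $$ (l, j))"
    by (intro sum.cong refl tri_entry[OF V VT len]) auto
  also have "\<dots> = (\<Sum>j<n. \<Sum>l<n. nu ! l * (V $$ (j, l) * V $$ (j, l)))"
    using V by (intro sum.cong refl) auto
  also have "\<dots> = (\<Sum>l<n. \<Sum>j<n. nu ! l * (V $$ (j, l) * V $$ (j, l)))" by (rule sum.swap)
  also have "\<dots> = (\<Sum>l<n. nu ! l)" by (intro sum.cong refl) (simp add: sum_distrib_left[symmetric] cs)
  finally show ?thesis .
qed

lemma frob_trace:
  fixes M :: "real mat"
  assumes M: "M \<in> carrier_mat m n"
  shows "(\<Sum>i<m. \<Sum>j<n. (M $$ (i, j))\<^sup>2) = (\<Sum>j<n. (transpose_mat M * M) $$ (j, j))"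
proof -
  have MT: "transpose_mat M \<in> carrier_mat n m" using M by simp
  have "(\<Sum>j<n. (transpose_mat M * M) $$ (j, j)) = (\<Sum>j<n. \<Sum>i<m. transpose_mat M $$ (j, i) * M $$ (i, j))"
    by (intro sum.cong refl mult_entry[OF MT M]) auto
  also have "\<dots> = (\<Sum>j<n. \<Sum>i<m. (M $$ (i, j))\<^sup>2)"
    using M by (intro sum.cong refl) (auto simp: power2_eq_square)
  also have "\<dots> = (\<Sum>i<m. \<Sum>j<n. (M $$ (i, j))\<^sup>2)" by (rule sum.swap)
  finally show ?thesis by simp
qed

lemma sum_sq_le_sq_sum:
  fixes b :: "nat \<Rightarrow> real"
  assumes "finite S" "\<And>x. x \<in> S \<Longrightarrow> b x \<ge> 0"
  shows "(\<Sum>x\<in>S. (b x)\<^sup>2) \<le> (\<Sum>x\<in>S. b x)\<^sup>2"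
  using assms
proof (induction S rule: finite_induct)
  case empty then show ?case by simp
next
  case (insert x F)
  have s: "(\<Sum>y\<in>F. b y) \<ge> 0" using insert by (intro sum_nonneg) auto
  have bx: "b x \<ge> 0" using insert by auto
  have "(\<Sum>y\<in>insert x F. (b y)\<^sup>2) = (b x)\<^sup>2 + (\<Sum>y\<in>F. (b y)\<^sup>2)" using insert by simp
  also have "\<dots> \<le> (b x)\<^sup>2 + (\<Sum>y\<in>F. b y)\<^sup>2" using insert by simp
  also have "\<dots> \<le> (b x + (\<Sum>y\<in>F. b y))\<^sup>2" using s bx by (simp add: power2_sum)
  also have "\<dots> = (\<Sum>y\<in>insert x F. b y)\<^sup>2" using insert by simp
  finally show ?case .
qed

lemma cauchy_card:
  fixes a :: "'a \<Rightarrow> real"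
  assumes "finite S"
  shows "(\<Sum>x\<in>S. a x)\<^sup>2 \<le> real (card S) * (\<Sum>x\<in>S. (a x)\<^sup>2)"
proof -
  define s where "s = (\<Sum>x\<in>S. a x)"
  define c where "c = real (card S)"
  define q where "q = (\<Sum>x\<in>S. (a x)\<^sup>2)"
  have "0 \<le> (\<Sum>x\<in>S. (c * a x - s)\<^sup>2)" by (intro sum_nonneg) auto
  also have "\<dots> = (\<Sum>x\<in>S. c\<^sup>2 * (a x)\<^sup>2 - 2 * c * s * a x + s\<^sup>2)"
    by (intro sum.cong refl) (simp add: power2_eq_square algebra_simps)
  also have "\<dots> = c\<^sup>2 * q - 2 * c * s * s + c * s\<^sup>2"
    unfolding q_def s_def c_def using assms
    by (simp add: sum.distrib sum_subtractf sum_distrib_left)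
  also have "\<dots> = c * (c * q - s\<^sup>2)" by (simp add: power2_eq_square algebra_simps)
  finally have h: "0 \<le> c * (c * q - s\<^sup>2)" .
  show ?thesis
  proof (cases "c = 0")
    case True
    then have "S = {}" using assms by (simp add: c_def)
    then show ?thesis by simp
  next
    case False
    then have "c > 0" by (simp add: c_def)
    then have "0 \<le> c * q - s\<^sup>2" using h by (simp add: zero_le_mult_iff)
    then show ?thesis by (simp add: s_def c_def q_def)
  qed
qed


lemma tail_zero:
  fixes Y :: "real mat"
  assumes Y: "Y \<in> carrier_mat m n" and YtY: "transpose_mat Y * Y = dmat mu"
    and len: "length mu = n" and srt: "sorted_wrt (\<ge>) mu"
    and nn: "\<And>i. i < n \<Longrightarrow> mu ! i \<ge> 0" and mn: "m < n"
  shows "mu ! m = 0"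
proof (rule ccontr)
  assume "mu ! m \<noteq> 0"
  then have pm: "mu ! m > 0" using nn[OF mn] by simp
  have pos: "mu ! i > 0" if "i \<le> m" for i
  proof (cases "i = m")
    case True then show ?thesis using pm by simp
  next
    case False
    then have "i < m" using that by simp
    then have "mu ! m \<le> mu ! i" using srt mn len by (auto simp: sorted_wrt_iff_nth_less)
    then show ?thesis using pm by simp
  qed
  define Z where "Z = mat (Suc m) (Suc m) (\<lambda>(i, j). if i < m then Y $$ (i, j) else 0)"
  have Z: "Z \<in> carrier_mat (Suc m) (Suc m)" unfolding Z_def by simp
  have YT: "transpose_mat Y \<in> carrier_mat n m" using Y by simp
  have ZtZ: "(\<Sum>p<Suc m. Z $$ (p, i) * Z $$ (p, j)) = (if i = j then mu ! i else 0)"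
    if ij: "i < Suc m" "j < Suc m" for i j
  proof -
    have ij': "i < n" "j < n" using ij mn by auto
    have "(\<Sum>p<Suc m. Z $$ (p, i) * Z $$ (p, j)) = (\<Sum>p<m. Y $$ (p, i) * Y $$ (p, j))"
      using ij by (simp add: Z_def)
    also have "\<dots> = (\<Sum>p<m. transpose_mat Y $$ (i, p) * Y $$ (p, j))"
      using Y ij' by (intro sum.cong) auto
    also have "\<dots> = (transpose_mat Y * Y) $$ (i, j)" by (rule mult_entry[OF YT Y ij', symmetric])
    also have "\<dots> = (if i = j then mu ! i else 0)" unfolding YtY using ij' len by simp
    finally show ?thesis .
  qed
  define L where "L = mat (Suc m) (Suc m) (\<lambda>(i, j). Z $$ (j, i) / mu ! i)"
  have L: "L \<in> carrier_mat (Suc m) (Suc m)" unfolding L_def by simp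
  have LZ: "L * Z = 1\<^sub>m (Suc m)"
  proof (rule eq_matI)
    fix i j assume "i < dim_row (1\<^sub>m (Suc m))" "j < dim_col (1\<^sub>m (Suc m))"
    then have ij: "i < Suc m" "j < Suc m" by auto
    have "(L * Z) $$ (i, j) = (\<Sum>p<Suc m. L $$ (i, p) * Z $$ (p, j))" by (rule mult_entry[OF L Z ij])
    also have "\<dots> = (\<Sum>p<Suc m. Z $$ (p, i) * Z $$ (p, j)) / mu ! i"
      unfolding sum_divide_distrib using ij by (intro sum.cong) (auto simp: L_def)
    also have "\<dots> = (if i = j then 1 else 0)" using ZtZ[OF ij] pos[of i] ij by auto
    finally show "(L * Z) $$ (i, j) = 1\<^sub>m (Suc m) $$ (i, j)" using ij by simp
  qed (use L Z in auto)
  have ZL: "Z * L = 1\<^sub>m (Suc m)" using mat_mult_left_right_inverse[OF L Z LZ] .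
  have "(Z * L) $$ (m, m) = (\<Sum>p<Suc m. Z $$ (m, p) * L $$ (p, m))" by (rule mult_entry[OF Z L]) auto
  also have "\<dots> = 0" by (simp add: Z_def)
  finally show False using ZL by simp
qed


lemma trunc_nuc_eq:
  assumes X: "X \<in> carrier_mat m n" and g: "gram_eigs_desc X = mu" and K: "K < min m n"
  shows "trunc_nuc K X = (\<Sum>l\<in>{K..<min m n}. sqrt (mu ! l))"
proof -
  obtain q where q: "min m n = Suc q" using K by (cases "min m n") auto
  have "trunc_nuc K X = (\<Sum>i = Suc K..Suc q. sqrt (mu ! (i - 1)))"
    unfolding trunc_nuc_def sing_val_def g using X q by simp
  also have "\<dots> = (\<Sum>l = K..q. sqrt (mu ! l))" by (subst sum.shift_bounds_cl_Suc_ivl) simp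
  also have "{K..q} = {K..<min m n}" using q by auto
  finally show ?thesis .
qed

lemma l1_step:
  fixes A X D :: "real mat"
  assumes A: "A \<in> carrier_mat m n" and X: "X \<in> carrier_mat m n" and D: "D \<in> carrier_mat m n" and t: "t \<ge> 0"
  shows "l1_norm_mat (A - (X + t \<cdot>\<^sub>m D)) \<le> l1_norm_mat (A - X) + t * l1_norm_mat D"
proof -
  have "l1_norm_mat (A - (X + t \<cdot>\<^sub>m D)) = (\<Sum>i<m. \<Sum>j<n. \<bar>(A $$ (i,j) - X $$ (i,j)) - t * D $$ (i,j)\<bar>)"
    unfolding l1_norm_mat_def using A X D by (intro sum.cong) auto
  also have "\<dots> \<le> (\<Sum>i<m. \<Sum>j<n. \<bar>A $$ (i,j) - X $$ (i,j)\<bar> + t * \<bar>D $$ (i,j)\<bar>)"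
  proof (intro sum_mono)
    fix i j
    have "\<bar>(A $$ (i,j) - X $$ (i,j)) - t * D $$ (i,j)\<bar> \<le> \<bar>A $$ (i,j) - X $$ (i,j)\<bar> + \<bar>t * D $$ (i,j)\<bar>"
      by (rule abs_triangle_ineq4)
    then show "\<bar>(A $$ (i,j) - X $$ (i,j)) - t * D $$ (i,j)\<bar> \<le> \<bar>A $$ (i,j) - X $$ (i,j)\<bar> + t * \<bar>D $$ (i,j)\<bar>"
      using t by (simp add: abs_mult)
  qed
  also have "\<dots> = l1_norm_mat (A - X) + t * l1_norm_mat D"
    unfolding l1_norm_mat_def using A X D by (simp add: sum.distrib sum_distrib_left)
  finally show ?thesis .
qed

theorem mainTheorem19:
  fixes A Xs :: "real mat" and m n K :: nat and \<gamma> :: real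
  assumes "A \<in> carrier_mat m n"
    and "K < min m n"
    and "\<gamma> > 0"
    and "d_stationary m n (obj A K \<gamma>) Xs"
    and "\<gamma> > sqrt (real (m * n))"
  shows "trunc_nuc K Xs = 0"
proof (rule ccontr)
  assume T0: "trunc_nuc K Xs \<noteq> 0"
  note Acar = assms(1) and K = assms(2) and gpos = assms(3) and gbig = assms(5)
  have X: "Xs \<in> carrier_mat m n" using assms(4) unfolding d_stationary_def by blast
  have st: "\<And>D. D \<in> carrier_mat m n \<Longrightarrow> \<exists>L. L \<ge> 0 \<and>
        ((\<lambda>t. (obj A K \<gamma> (Xs + t \<cdot>\<^sub>m D) - obj A K \<gamma> Xs) / t) \<longlongrightarrow> L) (at_right 0)"
    using assms(4) unfolding d_stationary_def by blast
  have XT: "transpose_mat Xs \<in> carrier_mat n m" using X by simp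
  have G: "transpose_mat Xs * Xs \<in> carrier_mat n n" using X by simp
  have symG: "transpose_mat (transpose_mat Xs * Xs) = transpose_mat Xs * Xs"
    using transpose_mult[OF XT X] by simp
  obtain V mu where V: "V \<in> carrier_mat n n" and Vo: "transpose_mat V * V = 1\<^sub>m n"
    and len: "length mu = n" and srt: "sorted_wrt (\<ge>) mu"
    and Gd: "transpose_mat Xs * Xs = V * dmat mu * transpose_mat V"
    using spectral[OF G symG] by blast
  have VT: "transpose_mat V \<in> carrier_mat n n" using V by simp
  have Dmu: "dmat mu \<in> carrier_mat n n" using len dmat_carrier[of mu] by simp
  have VVt: "V * transpose_mat V = 1\<^sub>m n" by (rule orth_right[OF V Vo])
  have geX: "gram_eigs_desc Xs = mu" by (rule gram_eigs_from_decomp[OF V Vo Gd len srt])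
  define Y where "Y = Xs * V"
  have Y: "Y \<in> carrier_mat m n" unfolding Y_def using X V by simp
  have XY: "Xs = Y * transpose_mat V"
    unfolding Y_def using assoc_mult_mat[OF X V VT] VVt X by simp
  have YtY: "transpose_mat Y * Y = dmat mu"
  proof -
    have "transpose_mat Y * Y = transpose_mat V * (transpose_mat Xs * Xs) * V"
      unfolding Y_def using transpose_mult[OF X V] assoc_mult_mat[OF VT XT, of "Xs * V" n]
        assoc_mult_mat[OF XT X V] assoc_mult_mat[OF VT G V] X V by simp
    also have "\<dots> = (transpose_mat V * V) * dmat mu * (transpose_mat V * V)"
      unfolding Gd using V VT Dmu
      by (simp add: assoc_mult_mat[of _ n n _ n _ n])
    also have "\<dots> = dmat mu" using Vo left_mult_one_mat[OF Dmu] right_mult_one_mat[OF Dmu] by simp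
    finally show ?thesis .
  qed
  have YT: "transpose_mat Y \<in> carrier_mat n m" using Y by simp
  have nn: "mu ! i \<ge> 0" if i: "i < n" for i
  proof -
    have "mu ! i = (transpose_mat Y * Y) $$ (i, i)" using YtY i len by simp
    also have "\<dots> = (\<Sum>l<m. transpose_mat Y $$ (i, l) * Y $$ (l, i))" by (rule mult_entry[OF YT Y i i])
    also have "\<dots> = (\<Sum>l<m. (Y $$ (l, i))\<^sup>2)" using Y i by (intro sum.cong) (auto simp: power2_eq_square)
    finally show ?thesis by (simp add: sum_nonneg)
  qed
  have zero: "mu ! i = 0" if i: "m \<le> i" "i < n" for i
  proof -
    have mn: "m < n" using i by simp
    have "mu ! m = 0" by (rule tail_zero[OF Y YtY len srt nn mn])
    moreover have "mu ! i \<le> mu ! m" using i srt len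
      by (cases "i = m") (auto simp: sorted_wrt_iff_nth_less)
    ultimately show ?thesis using nn[OF i(2)] by simp
  qed
  define T where "T = trunc_nuc K Xs"
  have Tsum: "T = (\<Sum>l\<in>{K..<min m n}. sqrt (mu ! l))"
    unfolding T_def by (rule trunc_nuc_eq[OF X geX K])
  have "T \<ge> 0" unfolding Tsum by (intro sum_nonneg) (auto simp: nn)
  then have Tpos: "T > 0" using T0 unfolding T_def by simp

  define nK :: "real list" where "nK = map (\<lambda>i. if i < K then 0 else -1) [0..<n]"
  have lnK: "length nK = n" by (simp add: nK_def)
  have DnK: "dmat nK \<in> carrier_mat n n" using lnK dmat_carrier[of nK] by simp
  define Dd where "Dd = Y * dmat nK * transpose_mat V"
  have Dd: "Dd \<in> carrier_mat m n" unfolding Dd_def using Y DnK VT by simp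
  define fK :: "real \<Rightarrow> real list" where "fK t = map (\<lambda>i. if i < K then 1 else 1 - t) [0..<n]" for t
  have lfK: "length (fK t) = n" for t by (simp add: fK_def)
  have DfK: "dmat (fK t) \<in> carrier_mat n n" for t using lfK[of t] dmat_carrier[of "fK t"] by simp
  have Xt: "Xs + t \<cdot>\<^sub>m Dd = Y * dmat (fK t) * transpose_mat V" for t
  proof (rule eq_matI)
    fix i j assume "i < dim_row (Y * dmat (fK t) * transpose_mat V)" "j < dim_col (Y * dmat (fK t) * transpose_mat V)"
    then have ij: "i < m" "j < n" using Y VT by auto
    have e1: "Xs $$ (i, j) = (\<Sum>l<n. Y $$ (i, l) * transpose_mat V $$ (l, j))"
      unfolding XY by (rule mult_entry[OF Y VT ij])
    have e2: "Dd $$ (i, j) = (\<Sum>l<n. Y $$ (i, l) * nK ! l * transpose_mat V $$ (l, j))"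
      unfolding Dd_def by (rule tri_entry[OF Y VT lnK ij])
    have e3: "(Y * dmat (fK t) * transpose_mat V) $$ (i, j) = (\<Sum>l<n. Y $$ (i, l) * fK t ! l * transpose_mat V $$ (l, j))"
      by (rule tri_entry[OF Y VT lfK ij])
    have "(Xs + t \<cdot>\<^sub>m Dd) $$ (i, j) = Xs $$ (i, j) + t * Dd $$ (i, j)" using X Dd ij by simp
    also have "\<dots> = (\<Sum>l<n. Y $$ (i, l) * (1 + t * nK ! l) * transpose_mat V $$ (l, j))"
      unfolding e1 e2 sum_distrib_left sum.distrib[symmetric] by (intro sum.cong) (auto simp: algebra_simps)
    also have "\<dots> = (\<Sum>l<n. Y $$ (i, l) * fK t ! l * transpose_mat V $$ (l, j))"
      by (intro sum.cong) (auto simp: nK_def fK_def)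
    finally show "(Xs + t \<cdot>\<^sub>m Dd) $$ (i, j) = (Y * dmat (fK t) * transpose_mat V) $$ (i, j)" using e3 by simp
  qed (use X Dd Y VT in auto)
  have Xtc: "Xs + t \<cdot>\<^sub>m Dd \<in> carrier_mat m n" for t using X Dd by simp
  define mu' where "mu' t = map (\<lambda>i. fK t ! i * mu ! i * fK t ! i) [0..<n]" for t
  have lmu': "length (mu' t) = n" for t by (simp add: mu'_def)
  have gramt: "transpose_mat (Xs + t \<cdot>\<^sub>m Dd) * (Xs + t \<cdot>\<^sub>m Dd) = V * dmat (mu' t) * transpose_mat V" for t
    unfolding Xt gram_conj[OF Y DfK V] YtY transpose_dmat mu'_def
    using dmat3[OF lfK len] by simp
  have srt': "sorted_wrt (\<ge>) (mu' t)" if t: "0 < t" "t < 1" for t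
  proof -
    have "mu' t ! j \<le> mu' t ! i" if ij: "i < j" "j < n" for i j
    proof -
      have mij: "mu ! j \<le> mu ! i" using srt len ij by (auto simp: sorted_wrt_iff_nth_less)
      have nj: "mu ! j \<ge> 0" using nn ij by simp
      have s1: "(1 - t) * mu ! j * (1 - t) \<le> mu ! j"
      proof -
        have "(1 - t) * (1 - t) \<le> 1" using t by (simp add: mult_le_one)
        then have "((1 - t) * (1 - t)) * mu ! j \<le> 1 * mu ! j" using nj by (intro mult_right_mono) auto
        then show ?thesis by (simp add: algebra_simps)
      qed
      have s2: "(1 - t) * mu ! j * (1 - t) \<le> (1 - t) * mu ! i * (1 - t)"
        using mij t by (intro mult_right_mono mult_left_mono) auto
      show ?thesis using ij mij s1 s2 by (auto simp: mu'_def fK_def)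
    qed
    then show ?thesis by (auto simp: sorted_wrt_iff_nth_less lmu')
  qed
  have Tt: "trunc_nuc K (Xs + t \<cdot>\<^sub>m Dd) = (1 - t) * T" if t: "0 < t" "t < 1" for t
  proof -
    have ge: "gram_eigs_desc (Xs + t \<cdot>\<^sub>m Dd) = mu' t"
      by (rule gram_eigs_from_decomp[OF V Vo gramt lmu' srt'[OF t]])
    have "trunc_nuc K (Xs + t \<cdot>\<^sub>m Dd) = (\<Sum>l\<in>{K..<min m n}. sqrt (mu' t ! l))"
      by (rule trunc_nuc_eq[OF Xtc ge K])
    also have "\<dots> = (\<Sum>l\<in>{K..<min m n}. (1 - t) * sqrt (mu ! l))"
    proof (intro sum.cong refl)
      fix l assume "l \<in> {K..<min m n}"
      then have l: "K \<le> l" "l < n" by auto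
      have "mu' t ! l = (1 - t)\<^sup>2 * mu ! l" using l by (simp add: mu'_def fK_def power2_eq_square)
      then show "sqrt (mu' t ! l) = (1 - t) * sqrt (mu ! l)" using t by (simp add: real_sqrt_mult)
    qed
    also have "\<dots> = (1 - t) * T" unfolding Tsum by (simp add: sum_distrib_left)
    finally show ?thesis .
  qed
  define nu where "nu = map (\<lambda>i. nK ! i * mu ! i * nK ! i) [0..<n]"
  have lnu: "length nu = n" by (simp add: nu_def)
  have DtD: "transpose_mat Dd * Dd = V * dmat nu * transpose_mat V"
    unfolding Dd_def gram_conj[OF Y DnK V] YtY transpose_dmat nu_def
    using dmat3[OF lnK len] by simp
  have frob: "(\<Sum>i<m. \<Sum>j<n. (Dd $$ (i, j))\<^sup>2) = (\<Sum>l\<in>{K..<min m n}. mu ! l)"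
  proof -
    have "(\<Sum>i<m. \<Sum>j<n. (Dd $$ (i, j))\<^sup>2) = (\<Sum>l<n. nu ! l)"
      unfolding frob_trace[OF Dd] DtD by (rule trace_conj[OF V Vo lnu])
    also have "\<dots> = (\<Sum>l<n. if K \<le> l \<and> l < m then mu ! l else 0)"
      using zero by (intro sum.cong) (auto simp: nu_def nK_def)
    also have "\<dots> = (\<Sum>l\<in>{K..<min m n}. mu ! l)"
      by (subst sum.If_cases) (auto intro!: sum.cong)
    finally show ?thesis .
  qed
  have frobT: "(\<Sum>i<m. \<Sum>j<n. (Dd $$ (i, j))\<^sup>2) \<le> T\<^sup>2"
  proof -
    have "(\<Sum>l\<in>{K..<min m n}. mu ! l) = (\<Sum>l\<in>{K..<min m n}. (sqrt (mu ! l))\<^sup>2)"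
      using nn by (intro sum.cong) auto
    also have "\<dots> \<le> (\<Sum>l\<in>{K..<min m n}. sqrt (mu ! l))\<^sup>2"
      by (rule sum_sq_le_sq_sum) (auto simp: nn)
    finally show ?thesis unfolding frob Tsum .
  qed
  have l1D: "l1_norm_mat Dd \<le> sqrt (real (m * n)) * T"
  proof -
    have eq: "l1_norm_mat Dd = (\<Sum>p\<in>{..<m} \<times> {..<n}. \<bar>Dd $$ p\<bar>)"
      unfolding l1_norm_mat_def using Dd by (simp add: sum.cartesian_product)
    have "(l1_norm_mat Dd)\<^sup>2 \<le> real (card ({..<m} \<times> {..<n})) * (\<Sum>p\<in>{..<m} \<times> {..<n}. \<bar>Dd $$ p\<bar>\<^sup>2)"
      unfolding eq by (rule cauchy_card) simp
    also have "(\<Sum>p\<in>{..<m} \<times> {..<n}. \<bar>Dd $$ p\<bar>\<^sup>2) = (\<Sum>i<m. \<Sum>j<n. (Dd $$ (i, j))\<^sup>2)"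
      by (simp add: sum.cartesian_product)
    also have "real (card ({..<m} \<times> {..<n})) = real (m * n)" by (simp add: card_cartesian_product)
    finally have "(l1_norm_mat Dd)\<^sup>2 \<le> real (m * n) * (\<Sum>i<m. \<Sum>j<n. (Dd $$ (i, j))\<^sup>2)" .
    also have "\<dots> \<le> real (m * n) * T\<^sup>2" using frobT by (intro mult_left_mono) auto
    also have "\<dots> = (sqrt (real (m * n)) * T)\<^sup>2" by (simp add: power_mult_distrib)
    finally have sq: "(l1_norm_mat Dd)\<^sup>2 \<le> (sqrt (real (m * n)) * T)\<^sup>2" .
    have "0 \<le> sqrt (real (m * n)) * T" using Tpos by simp
    then show ?thesis by (rule power2_le_imp_le[OF sq])
  qed
  define c where "c = l1_norm_mat Dd - \<gamma> * T"
  have cneg: "c < 0"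
  proof -
    have "sqrt (real (m * n)) * T < \<gamma> * T" using gbig Tpos by (intro mult_strict_right_mono) auto
    then show ?thesis using l1D unfolding c_def by simp
  qed
  have qle: "(obj A K \<gamma> (Xs + t \<cdot>\<^sub>m Dd) - obj A K \<gamma> Xs) / t \<le> c" if t: "0 < t" "t < 1" for t
  proof -
    have "obj A K \<gamma> (Xs + t \<cdot>\<^sub>m Dd) - obj A K \<gamma> Xs
        = l1_norm_mat (A - (Xs + t \<cdot>\<^sub>m Dd)) - l1_norm_mat (A - Xs) - \<gamma> * t * T"
      unfolding obj_def Tt[OF t] T_def by (simp add: algebra_simps)
    also have "\<dots> \<le> t * c"
      using l1_step[OF Acar X Dd, of t] t unfolding c_def by (simp add: algebra_simps)
    finally show ?thesis using t by (simp add: divide_le_eq mult.commute)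
  qed
  obtain L where L0: "L \<ge> 0"
    and lim: "((\<lambda>t. (obj A K \<gamma> (Xs + t \<cdot>\<^sub>m Dd) - obj A K \<gamma> Xs) / t) \<longlongrightarrow> L) (at_right 0)"
    using st[OF Dd] by blast
  have ev: "\<forall>\<^sub>F t in at_right 0. (obj A K \<gamma> (Xs + t \<cdot>\<^sub>m Dd) - obj A K \<gamma> Xs) / t \<le> c"
    using eventually_at_right_real[of 0 "1::real"] by (rule eventually_mono) (auto intro: qle)
  have "L \<le> c" by (rule tendsto_upperbound[OF lim ev]) simp
  then show False using L0 cneg by simp
qed
end
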